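(* Let $\langle B,\wedge,{}'\rangle$ be an algebra with $\wedge$ binary and ${}'$ unary satisfying $x\wedge y\approx y\wedge x$, $x\wedge(y\wedge z)\approx(x\wedge y)\wedge z$, $x''\approx x$, and $x'\approx (x\wedge y)'\wedge(x\wedge y')'$. Then for all $x,y\in B$: $(x\wedge y\wedge x)'=(y\wedge x)'$.
   Context: By associativity, $x\wedge y\wedge x$ is unambiguous. *)

theory Defs
  imports Main
begin

end

theory Submission
  imports Defs
begin

theorem lemma2p9:
  fixes B :: "'a set" and m :: "'a \<Rightarrow> 'a \<Rightarrow> 'a" and c :: "'a \<Rightarrow> 'a"
  assumes closed_m: "\<And>x y. x \<in> B \<Longrightarrow> y \<in> B \<Longrightarrow> m x y \<in> B"
    and closed_c: "\<And>x. x \<in> B \<Longrightarrow> c x \<in> B"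
    and comm: "\<And>x y. x \<in> B \<Longrightarrow> y \<in> B \<Longrightarrow> m x y = m y x"
    and assoc: "\<And>x y z. x \<in> B \<Longrightarrow> y \<in> B \<Longrightarrow> z \<in> B \<Longrightarrow> m x (m y z) = m (m x y) z"
    and invol: "\<And>x. x \<in> B \<Longrightarrow> c (c x) = x"
    and ax4: "\<And>x y. x \<in> B \<Longrightarrow> y \<in> B \<Longrightarrow> c x = m (c (m x y)) (c (m x (c y)))"
    and "x \<in> B" and "y \<in> B"
  shows "c (m (m x y) x) = c (m y x)"
proof -
  have idem: "m z z = z" if z: "z \<in> B" for z
    using z by (smt (verit) assoc ax4 closed_c closed_m comm invol)
  have "m (m x y) x = m (m y x) x" using comm assms(7,8) by simp
  also have "\<dots> = m y (m x x)" using assoc assms(7,8) by simp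
  also have "\<dots> = m y x" using idem assms(7) by simp
  finally show ?thesis by simp
qed

end
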